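(* Let $X$ be a complex Banach space and let $T\in\mathcal{B}(X)$ be a power-bounded operator. Suppose that $\omega:\mathbb{Z}_+\to(0,\infty)$ is a decreasing function such that $\|T^n(I-T)\|\leq\omega(n)$ for all $n\in\mathbb{Z}_+$ and $\omega(n)\to0$ as $n\to\infty$, and define $\omega^*:(0,\infty)\to\mathbb{Z}_+$ by $\omega^*(s):=\min\{n\in\mathbb{Z}_+:\omega(n)\leq s\}$. Then $\sigma(T)\cap\mathbb{T}\subset\{1\}$ and, for any $c\in(0,1)$, $$\|R(\mathrm{e}^{\mathrm{i}\theta},T)\|=O\left(\frac{1}{|\theta|}+\omega^*(c|\theta|)\right)\quad\text{as }|\theta|\to0.$$
   Context: $T$ is power-bounded if $\sup_{n\geq0}\|T^n\|<\infty$. $\mathbb{T}$ is the unit circle, $\sigma(T)$ the spectrum, and $R(\lambda,T)=(\lambda-T)^{-1}$ the resolvent for $\lambda$ in the resolvent set. *)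

theory Defs
  imports "HOL-Analysis.Analysis" "HOL-Library.Landau_Symbols"
begin

text \<open>Complex Banach spaces: a real Banach space together with a compatible
  complex scalar multiplication (the library only has real vector spaces).\<close>

class complex_banach = banach +
  fixes scaleC :: "complex \<Rightarrow> 'a \<Rightarrow> 'a"
  assumes scaleC_add_right: "scaleC a (x + y) = scaleC a x + scaleC a y"
    and scaleC_add_left: "scaleC (a + b) x = scaleC a x + scaleC b x"
    and scaleC_scaleC: "scaleC a (scaleC b x) = scaleC (a * b) x"
    and scaleC_one: "scaleC 1 x = x"
    and scaleC_of_real: "scaleC (complex_of_real r) x = scaleR r x"
    and norm_scaleC: "norm (scaleC a x) = cmod a * norm x"

instantiation complex :: complex_banach
begin
definition scaleC_complex :: "complex \<Rightarrow> complex \<Rightarrow> complex" where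
  "scaleC_complex a x = a * x"
instance
  by standard (auto simp: scaleC_complex_def algebra_simps norm_mult scaleR_conv_of_real)
end

definition bounded_clinear_op :: "('a::complex_banach \<Rightarrow> 'a) \<Rightarrow> bool" where
  "bounded_clinear_op T \<longleftrightarrow> bounded_linear T \<and> (\<forall>a x. T (scaleC a x) = scaleC a (T x))"

definition op_spectrum :: "('a::complex_banach \<Rightarrow> 'a) \<Rightarrow> complex set" where
  "op_spectrum T = {z. \<not> (\<exists>S. bounded_linear S \<and>
       (\<forall>x. S (scaleC z x - T x) = x) \<and> (\<forall>y. scaleC z (S y) - T (S y) = y))}"

text \<open>Resolvent R(\<lambda>,T) = (\<lambda>I - T)^{-1} (meaningful for \<lambda> outside the spectrum).\<close>
definition resolvent :: "complex \<Rightarrow> ('a::complex_banach \<Rightarrow> 'a) \<Rightarrow> ('a \<Rightarrow> 'a)" where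
  "resolvent z T = inv (\<lambda>x. scaleC z x - T x)"

definition power_bounded :: "('a::complex_banach \<Rightarrow> 'a) \<Rightarrow> bool" where
  "power_bounded T \<longleftrightarrow> (\<exists>M. \<forall>n. onorm (T ^^ n) \<le> M)"

definition omega_star :: "(nat \<Rightarrow> real) \<Rightarrow> real \<Rightarrow> nat" where
  "omega_star \<omega> s = (LEAST n. \<omega> n \<le> s)"

end

theory Submission
  imports Defs
begin

lemma additive_scaleC: "Modules.additive (scaleC a :: 'a::complex_banach \<Rightarrow> 'a)"
  by unfold_locales (rule scaleC_add_right)

lemma additive_scaleC_left: "Modules.additive (\<lambda>a. scaleC a (x::'a::complex_banach))"
  by unfold_locales (rule scaleC_add_left)

lemmas scaleC_diff_right = Modules.additive.diff[OF additive_scaleC]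
lemmas scaleC_zero_right = Modules.additive.zero[OF additive_scaleC]
lemmas scaleC_sum_right = Modules.additive.sum[OF additive_scaleC]
lemmas scaleC_diff_left = Modules.additive.diff[OF additive_scaleC_left]

lemma bounded_linear_scaleC: "bounded_linear (scaleC a :: 'a::complex_banach \<Rightarrow> 'a)"
proof (rule bounded_linear_intro[where K="cmod a"])
  show "scaleC a (x + y) = scaleC a x + scaleC a y" for x y :: 'a by (rule scaleC_add_right)
  show "scaleC a (scaleR r x) = scaleR r (scaleC a x)" for r and x :: 'a
    by (metis scaleC_of_real scaleC_scaleC mult.commute)
  show "norm (scaleC a x) \<le> norm x * cmod a" for x :: 'a by (simp add: norm_scaleC)
qed

lemma bl_add: "bounded_linear f \<Longrightarrow> f (x + y) = f x + f y"
  by (simp add: bounded_linear.linear linear_add)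
lemma bl_diff: "bounded_linear f \<Longrightarrow> f (x - y) = f x - f y"
  by (simp add: bounded_linear.linear linear_diff)
lemma bl_scaleR: "bounded_linear f \<Longrightarrow> f (r *\<^sub>R x) = r *\<^sub>R f x"
  by (simp add: bounded_linear.linear linear_scale)

lemma funpow_bl:
  fixes T :: "'a::real_normed_vector \<Rightarrow> 'a"
  assumes "bounded_linear T" shows "bounded_linear (T^^k)"
proof (induction k)
  case 0 then show ?case by (simp add: id_def bounded_linear_ident)
next
  case (Suc k) then show ?case using bounded_linear_compose[OF assms Suc.IH] by (simp add: o_def)
qed

lemma funpow_cl:
  fixes T :: "'a::complex_banach \<Rightarrow> 'a"
  assumes "\<And>a x. T (scaleC a x) = scaleC a (T x)"
  shows "(T^^k) (scaleC a x) = scaleC a ((T^^k) x)"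
  by (induction k) (simp_all add: assms)

lemma neumann:
  fixes B :: "'a::banach \<Rightarrow> 'a"
  assumes bl: "bounded_linear B" and nB: "\<And>y. norm (B y) \<le> q * norm y" and q0: "0 \<le> q" and q1: "q < 1"
  shows "\<exists>C. bounded_linear C \<and> (\<forall>y. C y + B (C y) = y) \<and> (\<forall>y. C (y + B y) = y)
             \<and> (\<forall>y. norm (C y) \<le> norm y / (1 - q))"
proof -
  define N where "N = (\<lambda>x. - B x)"
  have blN: "bounded_linear N" unfolding N_def using bl by (rule bounded_linear_minus)
  have nN: "norm (N y) \<le> q * norm y" for y unfolding N_def using nB by simp
  have blP: "bounded_linear (N^^k)" for k by (rule funpow_bl[OF blN])
  have nP: "norm ((N^^k) y) \<le> q^k * norm y" for k y
  proof (induction k)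
    case 0 then show ?case by simp
  next
    case (Suc k)
    have "norm ((N^^Suc k) y) \<le> q * norm ((N^^k) y)" using nN by simp
    also have "\<dots> \<le> q * (q^k * norm y)" using Suc q0 by (rule mult_left_mono)
    finally show ?case by (simp add: mult.assoc)
  qed
  have sg: "summable (\<lambda>k. q^k * norm y)" for y
    by (rule summable_mult2, rule summable_geometric) (use q0 q1 in simp)
  have sP: "summable (\<lambda>k. (N^^k) y)" for y
    by (rule summable_comparison_test'[OF sg[of y]]) (use nP in auto)
  have snP: "summable (\<lambda>k. norm ((N^^k) y))" for y
    by (rule summable_comparison_test'[OF sg[of y]]) (use nP in auto)
  define C where "C y = (\<Sum>k. (N^^k) y)" for y
  have Cadd: "C (x + y) = C x + C y" for x y
    unfolding C_def by (simp add: bl_add[OF blP] suminf_add[OF sP sP])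
  have Csc: "C (r *\<^sub>R x) = r *\<^sub>R C x" for r x
    unfolding C_def
    by (simp add: bl_scaleR[OF blP] bounded_linear.suminf[OF bounded_linear_scaleR_right sP])
  have nC: "norm (C y) \<le> norm y / (1 - q)" for y
  proof -
    have "norm (C y) \<le> (\<Sum>k. norm ((N^^k) y))" unfolding C_def by (rule summable_norm[OF snP])
    also have "\<dots> \<le> (\<Sum>k. q^k * norm y)" by (rule suminf_le[OF _ snP sg]) (rule nP)
    also have "\<dots> = norm y / (1 - q)"
      using suminf_mult2[OF summable_geometric[of q], of "norm y"] suminf_geometric[of q] q0 q1
      by simp
    finally show ?thesis .
  qed
  have blC: "bounded_linear C"
    by (rule bounded_linear_intro[where K="1/(1-q)"]) (use Cadd Csc nC in auto)
  have NC: "N (C y) = C y - y" for y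
  proof -
    have "N (C y) = (\<Sum>k. N ((N^^k) y))" unfolding C_def by (rule bounded_linear.suminf[OF blN sP])
    also have "\<dots> = (\<Sum>k. (N^^Suc k) y)" by simp
    also have "\<dots> = C y - y" unfolding C_def using suminf_split_head[OF sP[of y]] by simp
    finally show ?thesis .
  qed
  have CN: "C (N y) = C y - y" for y
  proof -
    have "C (N y) = (\<Sum>k. (N^^Suc k) y)" unfolding C_def
      by (simp add: funpow_swap1)
    also have "\<dots> = C y - y" unfolding C_def using suminf_split_head[OF sP[of y]] by simp
    finally show ?thesis .
  qed
  have 1: "C y + B (C y) = y" for y using NC[of y] unfolding N_def by (simp add: algebra_simps)
  have 2: "C (y + B y) = y" for y
  proof -
    have "C (y + B y) = C (y - N y)" unfolding N_def by simp
    also have "\<dots> = C y - C (N y)" by (rule bl_diff[OF blC])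
    finally have "C (y + B y) = C y - C (N y)" .
    then show ?thesis using CN by simp
  qed
  show ?thesis using blC 1 2 nC by blast
qed

lemma core:
  fixes T :: "'a::complex_banach \<Rightarrow> 'a"
  assumes bl: "bounded_linear T" and cl: "\<And>a x. T (scaleC a x) = scaleC a (T x)"
    and M: "\<And>k y. norm ((T^^k) y) \<le> M * norm y" and M0: "0 \<le> M"
    and z1: "cmod z = 1" and zne: "z \<noteq> 1"
    and om: "\<And>y. norm ((T^^n) (y - T y)) \<le> e * norm y"
    and eq: "e \<le> q * cmod (z - 1)" and q0: "0 \<le> q" and q1: "q < 1"
  shows "\<exists>S. bounded_linear S \<and> (\<forall>x. S (scaleC z x - T x) = x) \<and> (\<forall>y. scaleC z (S y) - T (S y) = y)
      \<and> (\<forall>y. norm (S y) \<le> (real n * M + M / cmod (z - 1)) / (1 - q) * norm y)"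
proof -
  have z0: "z \<noteq> 0" using z1 by auto
  define iz where "iz = inverse z"
  define w where "w = iz ^ n / (z - 1)"
  define L where "L x = scaleC z x - T x" for x
  define A where "A y = (\<Sum>k<n. scaleC (iz ^ Suc k) ((T^^k) y)) + scaleC w ((T^^n) y)" for y
  define B where "B y = scaleC w ((T^^n) (y - T y))" for y
  have blk: "bounded_linear (T^^k)" for k by (rule funpow_bl[OF bl])
  have clk: "(T^^k) (scaleC a x) = scaleC a ((T^^k) x)" for k a x by (rule funpow_cl[OF cl])
  have Tk: "(T^^k) (T x) = T ((T^^k) x)" for k x by (simp add: funpow_swap1)
  have addL: "Modules.additive L" unfolding L_def
    by unfold_locales (simp add: scaleC_add_right bl_add[OF bl] algebra_simps)
  have Lsc: "L (scaleC a u) = scaleC a (L u)" for a u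
    unfolding L_def by (simp add: cl scaleC_scaleC scaleC_diff_right mult.commute)
  have Lk: "L ((T^^k) x) = scaleC z ((T^^k) x) - T ((T^^k) x)" for k x unfolding L_def by simp
  have kL: "(T^^k) (L x) = scaleC z ((T^^k) x) - T ((T^^k) x)" for k x
    unfolding L_def by (simp add: bl_diff[OF blk] clk Tk)
  have tele: "(\<Sum>k<n. scaleC (iz ^ Suc k) (scaleC z (v k) - v (Suc k))) + scaleC w (scaleC z (v n) - v (Suc n))
      = v 0 + scaleC w (v n - v (Suc n))" for v :: "nat \<Rightarrow> 'a"
  proof -
    have "scaleC (iz ^ Suc k) (scaleC z (v k) - v (Suc k)) = scaleC (iz^k) (v k) - scaleC (iz ^ Suc k) (v (Suc k))" for k
    proof -
      have e: "iz ^ Suc k * z = iz ^ k" using z0 by (simp add: iz_def field_simps)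
      have "scaleC (iz ^ Suc k) (scaleC z (v k)) = scaleC (iz^k) (v k)" by (simp only: scaleC_scaleC e)
      then show ?thesis by (simp only: scaleC_diff_right)
    qed
    then have "(\<Sum>k<n. scaleC (iz ^ Suc k) (scaleC z (v k) - v (Suc k))) = v 0 - scaleC (iz^n) (v n)"
      using sum_lessThan_telescope'[of "\<lambda>k. scaleC (iz^k) (v k)" n]
      by (simp only: scaleC_one power_0)
    moreover have "scaleC w (scaleC z (v n)) = scaleC (iz^n) (v n) + scaleC w (v n)"
    proof -
      have "w * z = iz^n + w" using z0 zne by (simp add: w_def field_simps)
      then show ?thesis by (simp add: scaleC_scaleC scaleC_add_left)
    qed
    ultimately show ?thesis by (simp add: scaleC_diff_right algebra_simps)
  qed
  have LA: "L (A y) = y + B y" for y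
  proof -
    have "L (A y) = (\<Sum>k<n. scaleC (iz ^ Suc k) (L ((T^^k) y))) + scaleC w (L ((T^^n) y))"
      unfolding A_def by (simp add: Modules.additive.add[OF addL] Modules.additive.sum[OF addL] Lsc)
    also have "\<dots> = y + B y" unfolding Lk B_def using tele[of "\<lambda>k. (T^^k) y"]
      by (simp add: bl_diff[OF blk] Tk)
    finally show ?thesis .
  qed
  have AL: "A (L x) = x + B x" for x
    unfolding A_def kL B_def using tele[of "\<lambda>k. (T^^k) x"]
    by (simp add: bl_diff[OF blk] Tk)
  have ciz: "cmod iz = 1" using z1 by (simp add: iz_def norm_inverse)
  have zpos: "cmod (z - 1) > 0" using zne by simp
  have cw: "cmod w = 1 / cmod (z - 1)" by (simp add: w_def norm_divide norm_power ciz)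
  have blB: "bounded_linear B" unfolding B_def
    by (intro bounded_linear_compose[OF bounded_linear_scaleC] bounded_linear_compose[OF blk]
        bounded_linear_sub bounded_linear_ident bl)
  have nB: "norm (B y) \<le> q * norm y" for y
  proof -
    have "norm (B y) = (1 / cmod (z - 1)) * norm ((T^^n) (y - T y))"
      unfolding B_def by (simp add: norm_scaleC cw)
    also have "\<dots> \<le> (1 / cmod (z - 1)) * (e * norm y)"
      by (rule mult_left_mono[OF om]) (use zpos in simp)
    also have "\<dots> = (e / cmod (z - 1)) * norm y" by simp
    also have "\<dots> \<le> q * norm y"
      by (rule mult_right_mono) (use eq zpos in \<open>simp_all add: pos_divide_le_eq\<close>)
    finally show ?thesis .
  qed
  define K where "K = real n * M + M / cmod (z - 1)"
  have K0: "0 \<le> K" unfolding K_def using M0 zpos by simp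
  have blA: "bounded_linear A" unfolding A_def
    by (intro bounded_linear_add bounded_linear_sum bounded_linear_compose[OF bounded_linear_scaleC] blk)
  have nA: "norm (A y) \<le> K * norm y" for y
  proof -
    have "norm (A y) \<le> (\<Sum>k<n. norm (scaleC (iz ^ Suc k) ((T^^k) y))) + norm (scaleC w ((T^^n) y))"
      unfolding A_def by (rule order_trans[OF norm_triangle_ineq add_right_mono[OF norm_sum]])
    also have "\<dots> \<le> (\<Sum>k<n. M * norm y) + (1 / cmod (z - 1)) * (M * norm y)"
      by (intro add_mono sum_mono)
        (auto simp: norm_scaleC norm_mult norm_power ciz cw M intro!: divide_right_mono zpos)
    also have "\<dots> = K * norm y" unfolding K_def by (simp add: algebra_simps)
    finally show ?thesis .
  qed
  obtain C where blC: "bounded_linear C" and C1: "\<And>y. C y + B (C y) = y"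
    and C2: "\<And>y. C (y + B y) = y" and nC: "\<And>y. norm (C y) \<le> norm y / (1 - q)"
    using neumann[OF blB nB q0 q1] by blast
  define S where "S y = A (C y)" for y
  have LS: "L (S y) = y" for y unfolding S_def LA C1 ..
  have SL': "C (A (L x)) = x" for x unfolding AL C2 ..
  have SS: "S y = C (A y)" for y using SL'[of "S y"] LS[of y] by simp
  have SL: "S (L x) = x" for x using SS SL' by simp
  have blS: "bounded_linear S" unfolding S_def by (rule bounded_linear_compose[OF blA blC])
  have nS: "norm (S y) \<le> K / (1 - q) * norm y" for y
  proof -
    have "norm (S y) \<le> K * norm (C y)" unfolding S_def by (rule nA)
    also have "\<dots> \<le> K * (norm y / (1 - q))" by (rule mult_left_mono[OF nC K0])
    finally show ?thesis by simp
  qed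
  show ?thesis
    using blS SL LS nS unfolding L_def K_def by blast
qed

lemma exp_lim: "((\<lambda>t::real. (exp (\<i> * of_real t) - 1) / of_real t) \<longlongrightarrow> \<i>) (at 0)"
proof -
  have "((\<lambda>u. exp (\<i>*u)) has_field_derivative \<i>) (at 0)"
    by (auto intro!: derivative_eq_intros)
  from DERIV_D[OF this] have 1: "((\<lambda>h::complex. (exp (\<i> * h) - 1) / h) \<longlongrightarrow> \<i>) (at 0)"
    by simp
  have 2: "((\<lambda>t::real. complex_of_real t) \<longlongrightarrow> 0) (at 0)"
    by (auto intro!: tendsto_eq_intros)
  have 3: "\<exists>d>0. \<forall>x::real. x \<noteq> 0 \<and> norm (x - 0) < d \<longrightarrow> complex_of_real x \<noteq> 0"
    by (intro exI[of _ 1]) auto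
  show ?thesis
    using LIM_compose2[OF 2 1 3] by simp
qed

theorem theorem2p4:
  fixes T :: "'a::complex_banach \<Rightarrow> 'a" and \<omega> :: "nat \<Rightarrow> real" and c :: real
  assumes "bounded_clinear_op T"
    and "power_bounded T"
    and "\<And>n. \<omega> n > 0"
    and "antimono \<omega>"
    and "\<And>n. onorm (\<lambda>x. (T ^^ n) (x - T x)) \<le> \<omega> n"
    and "\<omega> \<longlonglongrightarrow> 0"
    and "0 < c" and "c < 1"
  shows "op_spectrum T \<inter> sphere 0 1 \<subseteq> {1} \<and>
         (\<lambda>\<theta>::real. onorm (resolvent (exp (\<i> * complex_of_real \<theta>)) T))
           \<in> O[at 0](\<lambda>\<theta>. 1 / \<bar>\<theta>\<bar> + real (omega_star \<omega> (c * \<bar>\<theta>\<bar>)))"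
proof -
  from assms(1) have bl: "bounded_linear T" and cl: "\<And>a x. T (scaleC a x) = scaleC a (T x)"
    unfolding bounded_clinear_op_def by auto
  from assms(2) obtain M0 where M0: "\<And>n. onorm (T^^n) \<le> M0" unfolding power_bounded_def by auto
  define M where "M = max M0 0"
  have Mnn: "0 \<le> M" unfolding M_def by simp
  have M: "norm ((T^^k) y) \<le> M * norm y" for k y
  proof -
    have "norm ((T^^k) y) \<le> onorm (T^^k) * norm y" by (rule onorm[OF funpow_bl[OF bl]])
    also have "\<dots> \<le> M * norm y" by (rule mult_right_mono) (use M0[of k] in \<open>auto simp: M_def\<close>)
    finally show ?thesis .
  qed
  have blW: "bounded_linear (\<lambda>x. (T^^n) (x - T x))" for n
    by (intro bounded_linear_compose[OF funpow_bl[OF bl]] bounded_linear_sub bounded_linear_ident bl)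
  have om: "norm ((T^^n) (y - T y)) \<le> \<omega> n * norm y" for n y
  proof -
    have "norm ((T^^n) (y - T y)) \<le> onorm (\<lambda>x. (T^^n) (x - T x)) * norm y" by (rule onorm[OF blW])
    also have "\<dots> \<le> \<omega> n * norm y" by (rule mult_right_mono[OF assms(5)]) simp
    finally show ?thesis .
  qed
  have exn: "\<exists>n. \<omega> n < r" if "r > 0" for r
  proof -
    from order_tendstoD(2)[OF assms(6) that] obtain N where "\<forall>n\<ge>N. \<omega> n < r"
      unfolding eventually_sequentially by blast
    then show ?thesis by blast
  qed
  have part1: "op_spectrum T \<inter> sphere 0 1 \<subseteq> {1}"
  proof
    fix z assume z: "z \<in> op_spectrum T \<inter> sphere 0 1"
    show "z \<in> {1}"
    proof (rule ccontr)
      assume "z \<notin> {1}" hence zne: "z \<noteq> 1" by simp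
      have z1: "cmod z = 1" using z by simp
      have "cmod (z - 1) / 2 > 0" using zne by simp
      from exn[OF this] obtain n where n: "\<omega> n < cmod (z - 1) / 2" by blast
      obtain S where "bounded_linear S" "\<forall>x. S (scaleC z x - T x) = x" "\<forall>y. scaleC z (S y) - T (S y) = y"
        using core[OF bl cl M Mnn z1 zne om[of n], of "1/2"] n by auto
      then show False using z unfolding op_spectrum_def by blast
    qed
  qed
  define c' where "c' = (1 + c) / 2"
  have c'pos: "0 < c'" "c < c'" "c' < 1" using assms(7,8) by (auto simp: c'_def)
  define q where "q = c / c'"
  have q: "0 \<le> q" "q < 1" using c'pos assms(7) by (auto simp: q_def)
  define K where "K = (M + M / c') / (1 - q)"
  have "((\<lambda>t::real. cmod ((exp (\<i> * of_real t) - 1) / of_real t)) \<longlongrightarrow> cmod \<i>) (at 0)"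
    by (rule tendsto_norm[OF exp_lim])
  then have ev1: "eventually (\<lambda>t::real. c' < cmod ((exp (\<i> * of_real t) - 1) / of_real t)) (at 0)"
    by (rule order_tendstoD) (use c'pos in simp)
  have ev2: "eventually (\<lambda>t::real. t \<noteq> 0) (at 0)" by (simp add: eventually_at_filter)
  have part2: "(\<lambda>\<theta>::real. onorm (resolvent (exp (\<i> * complex_of_real \<theta>)) T))
           \<in> O[at 0](\<lambda>\<theta>. 1 / \<bar>\<theta>\<bar> + real (omega_star \<omega> (c * \<bar>\<theta>\<bar>)))"
  proof (rule bigoI[where c=K])
    show "\<forall>\<^sub>F t in at 0. norm (onorm (resolvent (exp (\<i> * complex_of_real t)) T))
            \<le> K * norm (1 / \<bar>t\<bar> + real (omega_star \<omega> (c * \<bar>t\<bar>)))"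
      using ev1 ev2
    proof eventually_elim
      case (elim t)
      define z where "z = exp (\<i> * complex_of_real t)"
      have z1: "cmod z = 1" by (simp add: z_def)
      have tpos: "\<bar>t\<bar> > 0" using elim by simp
      have d: "c' * \<bar>t\<bar> < cmod (z - 1)"
        using elim(1) tpos by (simp add: z_def norm_divide pos_less_divide_eq)
      have zne: "z \<noteq> 1" using d c'pos tpos
        by (metis diff_self mult_pos_pos norm_zero not_less_iff_gr_or_eq)
      define n where "n = omega_star \<omega> (c * \<bar>t\<bar>)"
      have "\<exists>m. \<omega> m \<le> c * \<bar>t\<bar>" using exn[of "c * \<bar>t\<bar>"] assms(7) tpos
        by (meson less_imp_le mult_pos_pos)
      then have wn: "\<omega> n \<le> c * \<bar>t\<bar>" unfolding n_def omega_star_def by (rule LeastI_ex)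
      have eq: "\<omega> n \<le> q * cmod (z - 1)"
      proof -
        have "c * \<bar>t\<bar> = q * (c' * \<bar>t\<bar>)" using c'pos by (simp add: q_def)
        also have "\<dots> \<le> q * cmod (z - 1)" using d q by (intro mult_left_mono) auto
        finally show ?thesis using wn by simp
      qed
      obtain S where blS: "bounded_linear S" and S1: "\<forall>x. S (scaleC z x - T x) = x"
        and S2: "\<forall>y. scaleC z (S y) - T (S y) = y"
        and nS: "\<forall>y. norm (S y) \<le> (real n * M + M / cmod (z - 1)) / (1 - q) * norm y"
        using core[OF bl cl M Mnn z1 zne om[of n] eq q] by blast
      have R: "resolvent z T = S" unfolding resolvent_def
        by (rule inv_equality) (use S1 S2 in auto)
      have b0: "0 \<le> (real n * M + M / cmod (z - 1)) / (1 - q)" using Mnn q by simp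
      have "onorm S \<le> (real n * M + M / cmod (z - 1)) / (1 - q)"
        by (rule onorm_bound[OF b0]) (use nS in auto)
      also have "\<dots> \<le> (real n * M + M / (c' * \<bar>t\<bar>)) / (1 - q)"
      proof -
        have ct: "0 < c' * \<bar>t\<bar>" using c'pos tpos by simp
        have "M / cmod (z - 1) \<le> M / (c' * \<bar>t\<bar>)"
          by (rule divide_left_mono[OF less_imp_le[OF d] Mnn]) (rule mult_pos_pos[OF less_trans[OF ct d] ct])
        then show ?thesis using q by (intro divide_right_mono) auto
      qed
      also have "\<dots> \<le> K * (1 / \<bar>t\<bar> + real n)"
      proof -
        have "real n * M + M / (c' * \<bar>t\<bar>) \<le> (M + M / c') * (1 / \<bar>t\<bar> + real n)"
          using Mnn c'pos tpos by (simp add: algebra_simps divide_nonneg_nonneg)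
        then show ?thesis unfolding K_def using q by (simp add: divide_right_mono)
      qed
      finally have "onorm S \<le> K * (1 / \<bar>t\<bar> + real n)" .
      moreover have "0 \<le> onorm S" by (rule onorm_pos_le[OF blS])
      ultimately show ?case using tpos by (simp add: R[unfolded z_def] n_def)
    qed
  qed
  show ?thesis using part1 part2 by blast
qed

end
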